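(* Let $G$ be a non-trivial graph with maximum degree $\Delta$. Then $$ \begin{aligned} \tfrac{8}{11}\, H(G) \le H(\mathcal{L}(G)) \le H(G) & \quad \text{ if } \Delta<3,\\ \tfrac{4}{\Delta+3}\, H(G) \le H(\mathcal{L}(G)) \le (\Delta-1) H(G) & \quad \text{ if } 3 \le \Delta \le 4,\\ \tfrac{3}{2\Delta-1}\, H(G) \le H(\mathcal{L}(G)) \le (\Delta-1) H(G) & \quad \text{ if } \Delta>4. \end{aligned} $$
   Context: All graphs are finite and simple. A graph is non-trivial if each of its connected components has at least two edges. $d_u$ is the degree of $u$. The harmonic index is $H(G)=\sum_{uv\in E(G)}\frac{2}{d_u+d_v}$. The line graph $\mathcal{L}(G)$ has vertex set $E(G)$, two vertices being adjacent iff the corresponding edges share an end vertex in $G$. *)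

theory Defs
  imports Complex_Main
begin

definition graph :: "'a set \<Rightarrow> 'a set set \<Rightarrow> bool" where
  "graph V E \<longleftrightarrow> finite V \<and> (\<forall>e\<in>E. e \<subseteq> V \<and> card e = 2)"

definition degree :: "'a set set \<Rightarrow> 'a \<Rightarrow> nat" where
  "degree E u = card {e \<in> E. u \<in> e}"

definition max_degree :: "'a set \<Rightarrow> 'a set set \<Rightarrow> nat" where
  "max_degree V E = Max (degree E ` V)"

definition adjacent :: "'a set set \<Rightarrow> 'a \<Rightarrow> 'a \<Rightarrow> bool" where
  "adjacent E u v \<longleftrightarrow> {u, v} \<in> E"

definition component :: "'a set \<Rightarrow> 'a set set \<Rightarrow> 'a \<Rightarrow> 'a set" where
  "component V E v = {w \<in> V. (adjacent E)\<^sup>*\<^sup>* v w}"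

definition nontrivial_graph :: "'a set \<Rightarrow> 'a set set \<Rightarrow> bool" where
  "nontrivial_graph V E \<longleftrightarrow>
     (\<forall>v\<in>V. card {e \<in> E. e \<subseteq> component V E v} \<ge> 2)"

definition harmonic_index :: "'a set set \<Rightarrow> real" where
  "harmonic_index E = (\<Sum>e\<in>E. 2 / (\<Sum>u\<in>e. real (degree E u)))"

definition line_graph_edges :: "'a set set \<Rightarrow> 'a set set set" where
  "line_graph_edges E = {{e, f} | e f. e \<in> E \<and> f \<in> E \<and> e \<noteq> f \<and> e \<inter> f \<noteq> {}}"

end

theory Submission
  imports Defs
begin


definition om :: "nat \<Rightarrow> nat \<Rightarrow> real" where
  "om a b = (if b = 1 then 1 else if a = 1 then 0 else if 3 \<le> a \<and> b = 2 then 1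
             else if a = 2 \<and> 3 \<le> b then 0 else 1/2)"
definition om2 :: "nat \<Rightarrow> nat \<Rightarrow> real" where
  "om2 a b = (if b = 1 then 1 else if a = 1 then 0 else 1/2)"
definition cL :: "nat \<Rightarrow> real" where
  "cL D = (if D < 3 then 8/11 else if D \<le> 4 then 4 / (real D + 3) else 3 / (2 * real D - 1))"
definition cU :: "nat \<Rightarrow> real" where
  "cU D = (if D < 3 then 1 else real D - 1)"

lemma cL_nonneg: "0 \<le> cL D" by (simp add: cL_def)
lemma cL_le: "cL D \<le> 8/11"
proof -
  have "D \<ge> 5 \<Longrightarrow> 3 / (2 * real D - 1) \<le> 8/11" by (simp add: divide_simps)
  moreover have "3 \<le> D \<Longrightarrow> 4 / (real D + 3) \<le> 8/11" by (simp add: divide_simps)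
  ultimately show ?thesis unfolding cL_def by auto
qed
lemma cL_1: "3 \<le> D \<Longrightarrow> cL D * (1 + real D) \<le> 3"
  unfolding cL_def by (auto simp: divide_simps)
lemma cL_2: "3 \<le> D \<Longrightarrow> cL D * (2 + real D) \<le> 8"
  unfolding cL_def by (auto simp: divide_simps)

lemma poly1: fixes a b :: real assumes "0 \<le> a" "0 \<le> b"
  shows "6*(2*(a+3)+(b+5)-3) \<le> ((a+3)*(a+3)-1)*(2*(b+5)-1)"
proof -
  have "0 \<le> a*b" "0 \<le> a*a*b" "0 \<le> a*a" using assms by auto
  then show ?thesis using assms by (simp add: algebra_simps)
qed
lemma poly2: fixes a b :: real assumes "0 \<le> a" "0 \<le> b"
  shows "6*(2*(a+3)+(b+5)-2) \<le> ((a+3)-1)*((a+3)+2)*(2*(b+5)-1)"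
proof -
  have "0 \<le> a*b" "0 \<le> a*a*b" "0 \<le> a*a" using assms by auto
  then show ?thesis using assms by (simp add: algebra_simps)
qed
lemma poly3: fixes a b c :: real assumes "0 \<le> a" "0 \<le> b" "0 \<le> c"
  shows "3*(2*(a+3)+(c+3)+(b+5)-4) \<le> ((a+3)-1)*((a+3)+(c+3))*(2*(b+5)-1)"
proof -
  have "0 \<le> a*b" "0 \<le> a*a*b" "0 \<le> a*a" "0 \<le> a*c" "0 \<le> b*c" "0 \<le> a*b*c" using assms by auto
  then show ?thesis using assms by (simp add: algebra_simps)
qed

lemma frac_le: fixes a b c e :: real
  shows "0 < b \<Longrightarrow> 0 < e \<Longrightarrow> a * e \<le> c * b \<Longrightarrow> a / b \<le> c / e"
  by (simp add: divide_simps)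

lemma divmul: fixes p q Y Z :: real
  shows "0 < q \<Longrightarrow> p * Y \<le> Z * q \<Longrightarrow> p / q * Y \<le> Z"
  by (simp add: pos_divide_le_eq)

lemma L1:
  assumes "3 \<le> d" "d \<le> D" "1 \<le> x" "x \<le> D"
  shows "cL D * (om d x * 2 / (real d + real x)) \<le> (real d - 1) / (2 * real d + real x + real D - 4)"
proof -
  have pos: "0 < 2 * real d + real x + real D - 4" "0 < real d + real x" using assms by auto
  consider "x = 1" | "x = 2" | "3 \<le> x" using assms by linarith
  then show ?thesis
  proof cases
    case 1
    have "cL D * 2 * (2 * real d + real x + real D - 4) \<le> (real d - 1) * (real d + real x)"
    proof (cases "D \<le> 4")
      case True
      then have "D = 3 \<or> D = 4" "d = 3 \<or> d = 4" using assms by auto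
      then show ?thesis using 1 assms by (auto simp: cL_def)
    next
      case False
      have "6*(2*real d+real D-3) \<le> (real d*real d-1)*(2*real D-1)"
        using poly1[of "real d-3" "real D-5"] assms False by simp
      then show ?thesis using False 1 by (simp add: cL_def divide_simps algebra_simps)
    qed
    then have "(cL D * 2) / (real d + real x) \<le> (real d - 1) / (2 * real d + real x + real D - 4)"
      using pos by (intro frac_le) (auto simp: algebra_simps)
    then show ?thesis using 1 assms by (simp add: om_def)
  next
    case 2
    have "cL D * 2 * (2 * real d + real x + real D - 4) \<le> (real d - 1) * (real d + real x)"
    proof (cases "D \<le> 4")
      case True
      then have "D = 3 \<or> D = 4" "d = 3 \<or> d = 4" using assms by auto
      then show ?thesis using 2 assms by (auto simp: cL_def)
    next
      case False
      have "6*(2*real d+real D-2) \<le> (real d-1)*(real d+2)*(2*real D-1)"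
        using poly2[of "real d-3" "real D-5"] assms False by simp
      then show ?thesis using False 2 by (simp add: cL_def divide_simps algebra_simps)
    qed
    then have "(cL D * 2) / (real d + real x) \<le> (real d - 1) / (2 * real d + real x + real D - 4)"
      using pos by (intro frac_le) (auto simp: algebra_simps)
    then show ?thesis using 2 assms by (simp add: om_def)
  next
    case 3
    have "cL D * (2 * real d + real x + real D - 4) \<le> (real d - 1) * (real d + real x)"
    proof (cases "D \<le> 4")
      case True
      then have "D = 3 \<or> D = 4" "d = 3 \<or> d = 4" "x = 3 \<or> x = 4" using assms 3 by auto
      then show ?thesis using 3 assms by (auto simp: cL_def)
    next
      case False
      have "3*(2*real d+real x+real D-4) \<le> (real d-1)*(real d+real x)*(2*real D-1)"
        using poly3[of "real d-3" "real D-5" "real x - 3"] assms False 3 by simp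
      then have "3 / (2 * real D - 1) * (2 * real d + real x + real D - 4) \<le> (real d - 1) * (real d + real x)"
        using False by (intro divmul) (auto simp: algebra_simps)
      moreover have "cL D = 3 / (2 * real D - 1)" using False by (simp add: cL_def)
      ultimately show ?thesis by simp
    qed
    then have "cL D / (real d + real x) \<le> (real d - 1) / (2 * real d + real x + real D - 4)"
      using pos by (intro frac_le) (auto simp: algebra_simps)
    then show ?thesis using 3 assms by (simp add: om_def)
  qed
qed

lemma U1:
  assumes "3 \<le> d" "d \<le> D" "1 \<le> x" "x \<le> D"
  shows "(real d - 1) / (2 * real d + real x - 3) \<le> cU D * (om2 d x * 2 / (real d + real x))"
proof -
  have pos: "0 < 2 * real d + real x - 3" "0 < real d + real x" using assms by auto
  have cU: "cU D = real D - 1" using assms by (simp add: cU_def)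
  consider "x = 1" | "2 \<le> x" using assms by linarith
  then show ?thesis
  proof cases
    case 1
    have e: "(real d - 1) / (2 * real d + real x - 3) = 1/2" using 1 assms by (simp add: divide_simps)
    have "1/2 \<le> (cU D * 2) / (real d + real x)"
      using pos 1 assms cU by (intro frac_le) auto
    then show ?thesis unfolding e using 1 by (simp add: om2_def)
  next
    case 2
    have "(real d - 1) * (real d + real x) \<le> (real D - 1) * (2 * real d + real x - 3)"
      by (rule mult_mono) (use assms in auto)
    then have "(real d - 1) / (2 * real d + real x - 3) \<le> (real D - 1) / (real d + real x)"
      using pos by (intro frac_le) (auto simp: algebra_simps)
    then show ?thesis using 2 cU by (simp add: om2_def)
  qed
qed
lemma w1: "om 2 1 * 2 / (2 + real (1::nat)) = 2/3" by (simp add: om_def)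
lemma w2: "om 2 2 * 2 / (2 + real (2::nat)) = 1/4" by (simp add: om_def)
lemma w3: "3 \<le> a \<Longrightarrow> om 2 a * 2 / (2 + real a) = 0" by (simp add: om_def)

lemma L2a:
  assumes "1 \<le> a" "a \<le> D" "1 \<le> b" "b \<le> D" "a \<le> b"
  shows "cL D * (om 2 a * 2 / (2 + real a) + om 2 b * 2 / (2 + real b)) \<le> 2 / (real a + real b)"
proof -
  have c0: "0 \<le> cL D" "cL D \<le> 8/11" by (rule cL_nonneg, rule cL_le)
  consider "a = 1" "b = 1" | "a = 1" "b = 2" | "a = 1" "3 \<le> b" | "a = 2" "b = 2" | "a = 2" "3 \<le> b"
    | "3 \<le> a" "3 \<le> b" using assms by linarith
  then show ?thesis
  proof cases
    case 1 then show ?thesis using c0 by (simp add: om_def)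
  next
    case 2 then show ?thesis using c0 by (simp add: om_def)
  next
    case 3
    have "cL D * (1 + real b) \<le> cL D * (1 + real D)"
      using c0 assms by (intro mult_left_mono) auto
    also have "\<dots> \<le> 3" using cL_1[of D] 3 assms by auto
    finally have h: "cL D * (1 + real b) \<le> 3" .
    have "cL D * (2/3) \<le> 2 / (1 + real b)"
      using h by (simp add: field_simps)
    then show ?thesis using 3 by (simp add: om_def)
  next
    case 4 then show ?thesis using c0 by (simp add: om_def)
  next
    case 5
    have "cL D * (2 + real b) \<le> cL D * (2 + real D)"
      using c0 assms by (intro mult_left_mono) auto
    also have "\<dots> \<le> 8" using cL_2[of D] 5 assms by auto
    finally have h: "cL D * (2 + real b) \<le> 8" .
    have "cL D * (1/4) \<le> 2 / (2 + real b)"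
      using h by (simp add: field_simps)
    then show ?thesis using 5 by (simp add: om_def)
  next
    case 6 then show ?thesis by (simp add: om_def)
  qed
qed

lemma L2:
  assumes "1 \<le> a" "a \<le> D" "1 \<le> b" "b \<le> D"
  shows "cL D * (om 2 a * 2 / (2 + real a) + om 2 b * 2 / (2 + real b)) \<le> 2 / (real a + real b)"
proof (cases "a \<le> b")
  case True then show ?thesis using L2a assms by blast
next
  case False then show ?thesis using L2a[of b D a] assms by (simp add: add.commute)
qed

lemma U2a:
  assumes "1 \<le> a" "a \<le> D" "1 \<le> b" "b \<le> D" "a \<le> b"
  shows "2 / (real a + real b) \<le> cU D * (om2 2 a * 2 / (2 + real a) + om2 2 b * 2 / (2 + real b))"
proof -
  have cU1: "1 \<le> cU D" using assms by (simp add: cU_def)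
  have nn: "\<And>y. 0 \<le> om2 2 y * 2 / (2 + real y)" by (simp add: om2_def)
  consider "a = 1" "b = 1" | "a = 1" "2 \<le> b" | "2 \<le> a" "2 \<le> b" using assms by linarith
  then show ?thesis
  proof cases
    case 1 then show ?thesis using cU1 by (simp add: om2_def)
  next
    case 2
    have "2 / (real a + real b) \<le> 2/3" using 2 by (simp add: field_simps)
    also have "2/3 \<le> 1 * (2/3 + om2 2 b * 2 / (2 + real b))" using nn[of b] by simp
    also have "\<dots> \<le> cU D * (2/3 + om2 2 b * 2 / (2 + real b))"
      using cU1 nn[of b] by (intro mult_right_mono) auto
    finally show ?thesis using 2 by (simp add: om2_def)
  next
    case 3
    have e: "om2 2 a * 2 / (2 + real a) + om2 2 b * 2 / (2 + real b) = 1 / (2 + real a) + 1 / (2 + real b)"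
      using 3 by (simp add: om2_def)
    show ?thesis
    proof (cases "D = 2")
      case True
      then have "a = 2" "b = 2" using 3 assms by auto
      then show ?thesis unfolding e using True by (simp add: cU_def)
    next
      case False
      then have D3: "3 \<le> D" using assms 3 by auto
      have "2 / (real a + real b) \<le> 1/2" using 3 by (simp add: field_simps)
      also have "1/2 \<le> (real D - 1) * (2 / (2 + real D))" using D3 by (simp add: field_simps)
      also have "\<dots> \<le> (real D - 1) * (1 / (2 + real a) + 1 / (2 + real b))"
      proof (rule mult_left_mono)
        have "1 / (2 + real D) \<le> 1 / (2 + real a)" using assms by (simp add: frac_le)
        moreover have "1 / (2 + real D) \<le> 1 / (2 + real b)" using assms by (simp add: frac_le)
        ultimately show "2 / (2 + real D) \<le> 1 / (2 + real a) + 1 / (2 + real b)" by simp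
      qed (use D3 in auto)
      finally show ?thesis unfolding e using D3 by (simp add: cU_def)
    qed
  qed
qed

lemma U2:
  assumes "1 \<le> a" "a \<le> D" "1 \<le> b" "b \<le> D"
  shows "2 / (real a + real b) \<le> cU D * (om2 2 a * 2 / (2 + real a) + om2 2 b * 2 / (2 + real b))"
proof (cases "a \<le> b")
  case True then show ?thesis using U2a assms by blast
next
  case False then show ?thesis using U2a[of b D a] assms by (simp add: add.commute)
qed
lemma vertex:
  fixes A :: "'b set" and x :: "'b \<Rightarrow> nat" and d D :: nat
  assumes fin: "finite A" and cd: "card A = d" and dD: "d \<le> D"
    and xb: "\<And>e. e \<in> A \<Longrightarrow> 1 \<le> x e \<and> x e \<le> D"
    and nl: "\<And>e. e \<in> A \<Longrightarrow> d = 1 \<Longrightarrow> x e \<noteq> 1"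
  shows "cL D * (\<Sum>e\<in>A. om d (x e) * 2 / (real d + real (x e)))
           \<le> (\<Sum>e\<in>A. \<Sum>f\<in>A-{e}. 1 / ((real d + real (x e) - 2) + (real d + real (x f) - 2)))"
    and "(\<Sum>e\<in>A. \<Sum>f\<in>A-{e}. 1 / ((real d + real (x e) - 2) + (real d + real (x f) - 2)))
           \<le> cU D * (\<Sum>e\<in>A. om2 d (x e) * 2 / (real d + real (x e)))"
proof -
  let ?S = "(\<Sum>e\<in>A. \<Sum>f\<in>A-{e}. 1 / ((real d + real (x e) - 2) + (real d + real (x f) - 2)))"
  have "cL D * (\<Sum>e\<in>A. om d (x e) * 2 / (real d + real (x e))) \<le> ?S
        \<and> ?S \<le> cU D * (\<Sum>e\<in>A. om2 d (x e) * 2 / (real d + real (x e)))"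
  proof -
    consider "d = 0" | "d = 1" | "d = 2" | "3 \<le> d" by linarith
    then show ?thesis
    proof cases
      case 1
      then have "A = {}" using fin cd by auto
      then show ?thesis by simp
    next
      case 2
      then obtain e where A: "A = {e}" using cd card_1_singletonE by blast
      have "x e \<noteq> 1" using nl A 2 by auto
      then show ?thesis using A 2 by (simp add: om_def om2_def)
    next
      case 3
      then obtain e1 e2 where A: "A = {e1, e2}" and ne: "e1 \<noteq> e2" using cd card_2_iff by metis
      have b1: "1 \<le> x e1" "x e1 \<le> D" and b2: "1 \<le> x e2" "x e2 \<le> D" using xb A by auto
      have dd: "{e1,e2}-{e1} = {e2}" "{e1,e2}-{e2} = {e1}" using ne by auto
      have S: "?S = 2 / (real (x e1) + real (x e2))"
        using A ne 3 dd by (simp add: add.commute)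
      have l: "cL D * (om 2 (x e1) * 2 / (2 + real (x e1)) + om 2 (x e2) * 2 / (2 + real (x e2)))
               \<le> 2 / (real (x e1) + real (x e2))" using L2 b1 b2 by blast
      have u: "2 / (real (x e1) + real (x e2)) \<le>
               cU D * (om2 2 (x e1) * 2 / (2 + real (x e1)) + om2 2 (x e2) * 2 / (2 + real (x e2)))"
        using U2 b1 b2 by blast
      show ?thesis unfolding S using l u A ne 3 by simp
    next
      case 4
      have lo: "om d (x e) * 2 / (real d + real (x e)) * cL D
                \<le> (\<Sum>f\<in>A-{e}. 1 / ((real d + real (x e) - 2) + (real d + real (x f) - 2)))"
        if e: "e \<in> A" for e
      proof -
        have "om d (x e) * 2 / (real d + real (x e)) * cL D \<le> (real d - 1) / (2 * real d + real (x e) + real D - 4)"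
          using L1[of d D "x e"] 4 dD xb[OF e] by (simp add: mult.commute)
        also have "\<dots> = (\<Sum>f\<in>A-{e}. 1 / (2 * real d + real (x e) + real D - 4))"
          using fin e cd 4 by (simp add: of_nat_diff)
        also have "\<dots> \<le> (\<Sum>f\<in>A-{e}. 1 / ((real d + real (x e) - 2) + (real d + real (x f) - 2)))"
        proof (rule sum_mono)
          fix f assume f: "f \<in> A - {e}"
          show "1 / (2 * real d + real (x e) + real D - 4) \<le> 1 / ((real d + real (x e) - 2) + (real d + real (x f) - 2))"
            using xb[of f] xb[OF e] f 4 by (intro frac_le) auto
        qed
        finally show ?thesis .
      qed
      have up: "(\<Sum>f\<in>A-{e}. 1 / ((real d + real (x e) - 2) + (real d + real (x f) - 2)))
                \<le> om2 d (x e) * 2 / (real d + real (x e)) * cU D"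
        if e: "e \<in> A" for e
      proof -
        have "(\<Sum>f\<in>A-{e}. 1 / ((real d + real (x e) - 2) + (real d + real (x f) - 2)))
              \<le> (\<Sum>f\<in>A-{e}. 1 / (2 * real d + real (x e) - 3))"
        proof (rule sum_mono)
          fix f assume f: "f \<in> A - {e}"
          show "1 / ((real d + real (x e) - 2) + (real d + real (x f) - 2)) \<le> 1 / (2 * real d + real (x e) - 3)"
            using xb[of f] xb[OF e] f 4 by (intro frac_le) auto
        qed
        also have "\<dots> = (real d - 1) / (2 * real d + real (x e) - 3)"
          using fin e cd 4 by (simp add: of_nat_diff)
        also have "\<dots> \<le> om2 d (x e) * 2 / (real d + real (x e)) * cU D"
          using U1[of d D "x e"] 4 dD xb[OF e] by (simp add: mult.commute)
        finally show ?thesis .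
      qed
      have "cL D * (\<Sum>e\<in>A. om d (x e) * 2 / (real d + real (x e))) \<le> ?S"
        unfolding sum_distrib_left mult.commute[of "cL D"] by (rule sum_mono) (use lo in auto)
      moreover have "?S \<le> cU D * (\<Sum>e\<in>A. om2 d (x e) * 2 / (real d + real (x e)))"
        unfolding sum_distrib_left mult.commute[of "cU D"] by (rule sum_mono) (use up in auto)
      ultimately show ?thesis by blast
    qed
  qed
  then show "cL D * (\<Sum>e\<in>A. om d (x e) * 2 / (real d + real (x e))) \<le> ?S"
    and "?S \<le> cU D * (\<Sum>e\<in>A. om2 d (x e) * 2 / (real d + real (x e)))" by auto
qed


lemma finE: "graph V E \<Longrightarrow> finite E"
  unfolding graph_def by (meson Pow_iff finite_Pow_iff rev_finite_subset subsetI)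

lemma edge2: assumes "graph V E" "e \<in> E" "w \<in> e"
  obtains u where "e = {w, u}" "u \<noteq> w" "u \<in> V" "w \<in> V"
proof -
  have c: "card e = 2" "e \<subseteq> V" using assms unfolding graph_def by auto
  then obtain a b where ab: "e = {a,b}" "a \<noteq> b" using card_2_iff by metis
  show ?thesis
  proof (cases "w = a")
    case True then show ?thesis using that ab c by auto
  next
    case False then have "w = b" using ab assms by auto
    then show ?thesis using that[of a] ab c by (auto simp: insert_commute)
  qed
qed

lemma edge_eq: assumes "graph V E" "e \<in> E" "f \<in> E" "u \<in> e" "v \<in> e" "u \<in> f" "v \<in> f" "u \<noteq> v"
  shows "e = f"
proof -
  obtain a where a: "e = {u, a}" "a \<noteq> u" using edge2 assms by metis
  obtain b where b: "f = {u, b}" "b \<noteq> u" using edge2 assms by metis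
  show ?thesis using a b assms by auto
qed

lemma finEw: "graph V E \<Longrightarrow> finite {e \<in> E. w \<in> e}" by (drule finE) simp

lemma deg_pos: assumes "graph V E" "e \<in> E" "w \<in> e" shows "1 \<le> degree E w"
proof -
  have "e \<in> {f \<in> E. w \<in> f}" using assms by auto
  then have "{f \<in> E. w \<in> f} \<noteq> {}" by auto
  then show ?thesis unfolding degree_def using finEw[OF assms(1)] by (simp add: Suc_le_eq card_gt_0_iff)
qed

lemma deg_le: assumes "graph V E" "w \<in> V" shows "degree E w \<le> max_degree V E"
  unfolding max_degree_def using assms by (intro Max_ge) (auto simp: graph_def)

definition sn :: "'a set set \<Rightarrow> 'a set \<Rightarrow> nat" where
  "sn E e = (\<Sum>u\<in>e. degree E u)"

lemma sn_eq: assumes "graph V E" "e \<in> E" "e = {w, u}" "u \<noteq> w"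
  shows "sn E e = degree E w + degree E u"
  using assms by (simp add: sn_def)

lemma deg_line: assumes "graph V E" "e \<in> E" "e = {w, u}" "u \<noteq> w"
  shows "degree (line_graph_edges E) e = degree E w + degree E u - 2"
proof -
  let ?N = "{f \<in> E. f \<noteq> e \<and> f \<inter> e \<noteq> {}}"
  have N: "?N = ({f \<in> E. w \<in> f} - {e}) \<union> ({f \<in> E. u \<in> f} - {e})" using assms by auto
  have disj: "({f \<in> E. w \<in> f} - {e}) \<inter> ({f \<in> E. u \<in> f} - {e}) = {}"
    using edge_eq[OF assms(1,2)] assms by auto
  have cw: "card ({f \<in> E. w \<in> f} - {e}) = degree E w - 1"
    using assms finEw[OF assms(1)] by (simp add: degree_def)
  have cu: "card ({f \<in> E. u \<in> f} - {e}) = degree E u - 1"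
    using assms finEw[OF assms(1)] by (simp add: degree_def)
  have dw: "1 \<le> degree E w" "1 \<le> degree E u" using deg_pos[OF assms(1,2)] assms(3) by auto
  have cN: "card ?N = degree E w + degree E u - 2"
    unfolding N using card_Un_disjoint[OF _ _ disj] finEw[OF assms(1)] cw cu dw by simp
  have img: "{p \<in> line_graph_edges E. e \<in> p} = (\<lambda>f. {e, f}) ` ?N"
  proof
    show "{p \<in> line_graph_edges E. e \<in> p} \<subseteq> (\<lambda>f. {e, f}) ` ?N"
    proof
      fix p assume "p \<in> {p \<in> line_graph_edges E. e \<in> p}"
      then obtain a b where p: "p = {a,b}" "a \<in> E" "b \<in> E" "a \<noteq> b" "a \<inter> b \<noteq> {}" "e \<in> p"
        unfolding line_graph_edges_def by auto
      show "p \<in> (\<lambda>f. {e, f}) ` ?N"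
      proof (cases "e = a")
        case True then show ?thesis using p by (auto simp: Int_commute)
      next
        case False then have "e = b" using p by auto
        then show ?thesis using p by (auto simp: insert_commute)
      qed
    qed
    show "(\<lambda>f. {e, f}) ` ?N \<subseteq> {p \<in> line_graph_edges E. e \<in> p}"
      using assms(2) unfolding line_graph_edges_def by (auto simp: Int_commute)
  qed
  have inj: "inj_on (\<lambda>f. {e, f}) ?N"
    by (rule inj_onI) (auto simp: doubleton_eq_iff)
  show ?thesis unfolding degree_def img card_image[OF inj] cN ..
qed

lemma single_deg: assumes "graph V E" "e \<in> E" "w \<in> e" "degree E w = 1"
  shows "{f \<in> E. w \<in> f} = {e}"
proof -
  have m: "e \<in> {f \<in> E. w \<in> f}" using assms by blast
  have "card {f \<in> E. w \<in> f} = 1" using assms(4) by (simp add: degree_def)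
  then obtain x where x: "{f \<in> E. w \<in> f} = {x}" by (rule card_1_singletonE)
  with m have "x = e" by blast
  with x show ?thesis by simp
qed

lemma nontriv_sn: assumes "graph V E" "nontrivial_graph V E" "e \<in> E" "e = {w, u}" "u \<noteq> w"
  shows "\<not> (degree E w = 1 \<and> degree E u = 1)"
proof
  assume a: "degree E w = 1 \<and> degree E u = 1"
  have Ew: "{f \<in> E. w \<in> f} = {e}" using single_deg[OF assms(1,3)] assms(4) a by blast
  have Eu: "{f \<in> E. u \<in> f} = {e}" using single_deg[OF assms(1,3)] assms(4) a by blast
  have reach: "(adjacent E)\<^sup>*\<^sup>* w z \<Longrightarrow> z \<in> {w, u}" for z
  proof (induction rule: rtranclp_induct)
    case base then show ?case by simp
  next
    case (step y z)
    have m: "{y, z} \<in> {f \<in> E. y \<in> f}" using step.hyps(2) by (simp add: adjacent_def)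
    have Ey: "{f \<in> E. y \<in> f} = {e}" using step.IH Ew Eu by blast
    from m have "{y, z} \<in> {e}" unfolding Ey .
    then have "{y, z} = e" by (simp only: singleton_iff)
    then have "z \<in> e" by blast
    then show ?case unfolding assms(4) .
  qed
  have wV: "w \<in> V" using assms(1,3,4) unfolding graph_def by blast
  have sub: "{f \<in> E. f \<subseteq> component V E w} \<subseteq> {e}"
  proof
    fix f assume f: "f \<in> {f \<in> E. f \<subseteq> component V E w}"
    then have fs: "f \<subseteq> {w, u}" using reach unfolding component_def by blast
    have c2: "card f = 2" using f assms(1) unfolding graph_def by blast
    have "f = {w,u}" using card_subset_eq[of "{w,u}" f] fs c2 assms(5) by simp
    then show "f \<in> {e}" using assms(4) by simp
  qed
  have "card {f \<in> E. f \<subseteq> component V E w} \<le> 1"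
    using card_mono[OF _ sub] by simp
  moreover have "2 \<le> card {f \<in> E. f \<subseteq> component V E w}"
    using assms(2) wV unfolding nontrivial_graph_def by blast
  ultimately show False by simp
qed



lemma swap_edges:
  assumes "graph V E"
  shows "(\<Sum>e\<in>E. \<Sum>w\<in>e. F w e) = (\<Sum>w\<in>V. \<Sum>e\<in>{e \<in> E. w \<in> e}. F w e)"
proof -
  have fV: "finite V" using assms by (simp add: graph_def)
  have sub: "\<And>e. e \<in> E \<Longrightarrow> {w. w \<in> V \<and> w \<in> e} = e" using assms unfolding graph_def by blast
  have "(\<Sum>e\<in>E. \<Sum>w\<in>e. F w e) = (\<Sum>e\<in>E. \<Sum>w\<in>{w. w \<in> V \<and> w \<in> e}. F w e)"
    by (rule sum.cong) (auto simp: sub)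
  also have "\<dots> = (\<Sum>w\<in>V. \<Sum>e\<in>{e. e \<in> E \<and> w \<in> e}. F w e)"
    by (rule sum.swap_restrict[OF finE[OF assms] fV])
  finally show ?thesis by simp
qed

lemma HG_decomp:
  fixes W :: "nat \<Rightarrow> nat \<Rightarrow> real"
  assumes g: "graph V E" and nt: "nontrivial_graph V E"
    and W: "\<And>a b. 1 \<le> a \<Longrightarrow> 1 \<le> b \<Longrightarrow> \<not> (a = 1 \<and> b = 1) \<Longrightarrow> W a b + W b a = 1"
  shows "harmonic_index E = (\<Sum>w\<in>V. \<Sum>e\<in>{e \<in> E. w \<in> e}.
            W (degree E w) (sn E e - degree E w) * 2 / (real (degree E w) + real (sn E e - degree E w)))"
proof -
  let ?F = "\<lambda>w e. W (degree E w) (sn E e - degree E w) * 2 / (real (degree E w) + real (sn E e - degree E w))"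
  have "harmonic_index E = (\<Sum>e\<in>E. \<Sum>w\<in>e. ?F w e)"
    unfolding harmonic_index_def
  proof (rule sum.cong[OF refl])
    fix e assume e: "e \<in> E"
    have c: "card e = 2" using g e unfolding graph_def by blast
    then obtain w u where wu: "e = {w, u}" "w \<noteq> u" using card_2_iff by metis
    have u: "u \<noteq> w" using wu by simp
    have sn1: "sn E e = degree E w + degree E u" using sn_eq[OF g e wu(1) u] .
    have sn2: "sn E e = degree E u + degree E w" using sn1 by simp
    have d1: "1 \<le> degree E w" "1 \<le> degree E u" using deg_pos[OF g e] wu by auto
    have nt1: "\<not> (degree E w = 1 \<and> degree E u = 1)" using nontriv_sn[OF g nt e wu(1) u] .
    have Ws: "W (degree E w) (degree E u) + W (degree E u) (degree E w) = 1"
      using W d1 nt1 by blast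
    have "(\<Sum>w\<in>e. ?F w e) = W (degree E w) (degree E u) * 2 / (real (degree E w) + real (degree E u))
          + W (degree E u) (degree E w) * 2 / (real (degree E u) + real (degree E w))"
      using wu sn1 sn2 by simp
    also have "\<dots> = (W (degree E w) (degree E u) + W (degree E u) (degree E w)) * 2 / (real (degree E w) + real (degree E u))"
      by (simp add: add_divide_distrib add.commute ring_distribs)
    also have "\<dots> = 2 / (\<Sum>u\<in>e. real (degree E u))"
      using Ws wu by simp
    finally show "2 / (\<Sum>u\<in>e. real (degree E u)) = (\<Sum>w\<in>e. ?F w e)" by simp
  qed
  also have "\<dots> = (\<Sum>w\<in>V. \<Sum>e\<in>{e \<in> E. w \<in> e}. ?F w e)" by (rule swap_edges[OF g])
  finally show ?thesis .
qed

lemma HL_decomp: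
  assumes g: "graph V E"
  defines "k \<equiv> \<lambda>e. real (degree (line_graph_edges E) e)"
  shows "harmonic_index (line_graph_edges E) =
           (\<Sum>w\<in>V. \<Sum>e\<in>{e \<in> E. w \<in> e}. \<Sum>f\<in>{e \<in> E. w \<in> e} - {e}. 1 / (k e + k f))"
proof -
  let ?L = "line_graph_edges E"
  let ?N = "\<lambda>e. {f \<in> E. f \<noteq> e \<and> f \<inter> e \<noteq> {}}"
  let ?P = "SIGMA e:E. ?N e"
  let ?h = "\<lambda>q. 1 / (k (fst q) + k (snd q))"
  have fE: "finite E" using finE[OF g] .
  have fP: "finite ?P" using fE by (intro finite_SigmaI) auto
  have fL: "finite ?L"
  proof -
    have "?L \<subseteq> (\<lambda>q. {fst q, snd q}) ` (E \<times> E)"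
    proof
      fix p assume "p \<in> ?L"
      then obtain a b where p: "p = {a,b}" "a \<in> E" "b \<in> E"
        unfolding line_graph_edges_def by auto
      show "p \<in> (\<lambda>q. {fst q, snd q}) ` (E \<times> E)"
        by (rule image_eqI[of _ _ "(a,b)"]) (use p in auto)
    qed
    then show ?thesis using fE by (meson finite_SigmaI finite_imageI finite_subset)
  qed
  have img: "(\<lambda>q. {fst q, snd q}) ` ?P \<subseteq> ?L"
  proof
    fix p assume "p \<in> (\<lambda>q. {fst q, snd q}) ` ?P"
    then obtain q where q: "q \<in> ?P" "p = {fst q, snd q}" by blast
    obtain a b where qab: "q = (a, b)" by (cases q)
    have ab: "p = {a, b}" "a \<in> E" "b \<in> E" "b \<noteq> a" "b \<inter> a \<noteq> {}" using q qab by auto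
    then have "a \<noteq> b" "a \<inter> b \<noteq> {}" by (auto simp: Int_commute)
    then show "p \<in> ?L" unfolding line_graph_edges_def using ab by blast
  qed
  have "harmonic_index ?L = (\<Sum>p\<in>?L. \<Sum>q\<in>{q. q \<in> ?P \<and> {fst q, snd q} = p}. ?h q)"
    unfolding harmonic_index_def
  proof (rule sum.cong[OF refl])
    fix p assume "p \<in> ?L"
    then obtain a b where p: "p = {a,b}" "a \<in> E" "b \<in> E" "a \<noteq> b" "a \<inter> b \<noteq> {}"
      unfolding line_graph_edges_def by auto
    have fib: "{q. q \<in> ?P \<and> {fst q, snd q} = p} = {(a,b), (b,a)}"
      using p by (auto simp: doubleton_eq_iff Int_commute)
    have "(\<Sum>q\<in>{q. q \<in> ?P \<and> {fst q, snd q} = p}. ?h q) = 1 / (k a + k b) + 1 / (k b + k a)"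
      unfolding fib using p by simp
    also have "\<dots> = 2 / (\<Sum>x\<in>p. real (degree ?L x))"
      using p by (simp add: k_def add.commute)
    finally show "2 / (\<Sum>x\<in>p. real (degree ?L x)) = (\<Sum>q\<in>{q. q \<in> ?P \<and> {fst q, snd q} = p}. ?h q)" by simp
  qed
  also have "\<dots> = (\<Sum>q\<in>?P. ?h q)" by (rule sum.group[OF fP fL img])
  also have "\<dots> = (\<Sum>e\<in>E. \<Sum>f\<in>?N e. 1 / (k e + k f))"
    using fE by (subst sum.Sigma) (auto simp: case_prod_beta)
  also have "\<dots> = (\<Sum>e\<in>E. \<Sum>w\<in>e. \<Sum>f\<in>{e \<in> E. w \<in> e} - {e}. 1 / (k e + k f))"
  proof (rule sum.cong[OF refl])
    fix e assume e: "e \<in> E"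
    have c: "card e = 2" using g e unfolding graph_def by blast
    then obtain w u where wu: "e = {w, u}" "w \<noteq> u" using card_2_iff by metis
    have N: "?N e = ({f \<in> E. w \<in> f} - {e}) \<union> ({f \<in> E. u \<in> f} - {e})" using wu by auto
    have disj: "({f \<in> E. w \<in> f} - {e}) \<inter> ({f \<in> E. u \<in> f} - {e}) = {}"
      using edge_eq[OF g e] wu by auto
    have "(\<Sum>f\<in>?N e. 1 / (k e + k f)) = (\<Sum>f\<in>{f \<in> E. w \<in> f} - {e}. 1 / (k e + k f)) + (\<Sum>f\<in>{f \<in> E. u \<in> f} - {e}. 1 / (k e + k f))"
      unfolding N by (rule sum.union_disjoint) (use fE disj in auto)
    also have "\<dots> = (\<Sum>w\<in>e. \<Sum>f\<in>{e \<in> E. w \<in> e} - {e}. 1 / (k e + k f))"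
      using wu by simp
    finally show "(\<Sum>f\<in>?N e. 1 / (k e + k f)) = (\<Sum>w\<in>e. \<Sum>f\<in>{e \<in> E. w \<in> e} - {e}. 1 / (k e + k f))" .
  qed
  also have "\<dots> = (\<Sum>w\<in>V. \<Sum>e\<in>{e \<in> E. w \<in> e}. \<Sum>f\<in>{e \<in> E. w \<in> e} - {e}. 1 / (k e + k f))"
    by (rule swap_edges[OF g])
  finally show ?thesis .
qed

lemma kform: assumes g: "graph V E" and e: "e \<in> E" and w: "w \<in> e"
  shows "real (degree (line_graph_edges E) e) = real (degree E w) + real (sn E e - degree E w) - 2"
    and "1 \<le> sn E e - degree E w" and "sn E e - degree E w \<le> max_degree V E"
    and "nontrivial_graph V E \<Longrightarrow> degree E w = 1 \<Longrightarrow> sn E e - degree E w \<noteq> 1"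
proof -
  obtain u where u: "e = {w, u}" "u \<noteq> w" "u \<in> V" "w \<in> V" using edge2[OF g e w] by blast
  have sn: "sn E e - degree E w = degree E u" using sn_eq[OF g e u(1,2)] by simp
  have d: "1 \<le> degree E w" "1 \<le> degree E u" using deg_pos[OF g e] u w by auto
  show "real (degree (line_graph_edges E) e) = real (degree E w) + real (sn E e - degree E w) - 2"
    unfolding sn deg_line[OF g e u(1,2)] using d by (simp add: of_nat_diff)
  show "1 \<le> sn E e - degree E w" unfolding sn using d by simp
  show "sn E e - degree E w \<le> max_degree V E" unfolding sn using deg_le[OF g u(3)] .
  show "nontrivial_graph V E \<Longrightarrow> degree E w = 1 \<Longrightarrow> sn E e - degree E w \<noteq> 1"
    unfolding sn using nontriv_sn[OF g _ e u(1,2)] by blast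
qed

lemma om_sym: "1 \<le> a \<Longrightarrow> 1 \<le> b \<Longrightarrow> \<not> (a = 1 \<and> b = 1) \<Longrightarrow> om a b + om b a = 1"
  by (auto simp: om_def)
lemma om2_sym: "1 \<le> a \<Longrightarrow> 1 \<le> b \<Longrightarrow> \<not> (a = 1 \<and> b = 1) \<Longrightarrow> om2 a b + om2 b a = 1"
  by (auto simp: om2_def)

lemma main_bounds:
  assumes g: "graph V E" and nt: "nontrivial_graph V E"
  shows "cL (max_degree V E) * harmonic_index E \<le> harmonic_index (line_graph_edges E)"
    and "harmonic_index (line_graph_edges E) \<le> cU (max_degree V E) * harmonic_index E"
proof -
  let ?D = "max_degree V E"
  let ?k = "\<lambda>e. real (degree (line_graph_edges E) e)"
  let ?A = "\<lambda>w. {e \<in> E. w \<in> e}"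
  let ?x = "\<lambda>w e. sn E e - degree E w"
  let ?S = "\<lambda>w. \<Sum>e\<in>?A w. \<Sum>f\<in>?A w - {e}. 1 / (?k e + ?k f)"
  let ?T = "\<lambda>w. \<Sum>e\<in>?A w. om (degree E w) (?x w e) * 2 / (real (degree E w) + real (?x w e))"
  let ?T2 = "\<lambda>w. \<Sum>e\<in>?A w. om2 (degree E w) (?x w e) * 2 / (real (degree E w) + real (?x w e))"
  have HL: "harmonic_index (line_graph_edges E) = (\<Sum>w\<in>V. ?S w)" using HL_decomp[OF g] by simp
  have HG: "harmonic_index E = (\<Sum>w\<in>V. ?T w)" using HG_decomp[OF g nt om_sym] by simp
  have HG2: "harmonic_index E = (\<Sum>w\<in>V. ?T2 w)" using HG_decomp[OF g nt om2_sym] by simp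
  have vb: "cL ?D * ?T w \<le> ?S w \<and> ?S w \<le> cU ?D * ?T2 w" if w: "w \<in> V" for w
  proof -
    have Seq: "?S w = (\<Sum>e\<in>?A w. \<Sum>f\<in>?A w - {e}. 1 / ((real (degree E w) + real (?x w e) - 2)
                      + (real (degree E w) + real (?x w f) - 2)))"
    proof (rule sum.cong[OF refl], rule sum.cong[OF refl])
      fix e f assume e: "e \<in> ?A w" and f: "f \<in> ?A w - {e}"
      show "1 / (?k e + ?k f) = 1 / ((real (degree E w) + real (?x w e) - 2)
                      + (real (degree E w) + real (?x w f) - 2))"
        using kform(1)[OF g, of e w] kform(1)[OF g, of f w] e f by simp
    qed
    have fin: "finite (?A w)" using finEw[OF g] .
    have cd: "card (?A w) = degree E w" by (simp add: degree_def)
    have dD: "degree E w \<le> ?D" using deg_le[OF g w] .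
    have xb: "\<And>e. e \<in> ?A w \<Longrightarrow> 1 \<le> ?x w e \<and> ?x w e \<le> ?D" using kform(2,3)[OF g] by blast
    have nl: "\<And>e. e \<in> ?A w \<Longrightarrow> degree E w = 1 \<Longrightarrow> ?x w e \<noteq> 1" using kform(4)[OF g _ _ nt] by blast
    show ?thesis unfolding Seq using vertex[where x="\<lambda>e. sn E e - degree E w", OF fin cd dD xb nl] by blast
  qed
  have "cL ?D * (\<Sum>w\<in>V. ?T w) = (\<Sum>w\<in>V. cL ?D * ?T w)" by (rule sum_distrib_left)
  also have "\<dots> \<le> (\<Sum>w\<in>V. ?S w)" by (rule sum_mono) (use vb in blast)
  finally show "cL ?D * harmonic_index E \<le> harmonic_index (line_graph_edges E)"
    unfolding HL HG .
  have "(\<Sum>w\<in>V. ?S w) \<le> (\<Sum>w\<in>V. cU ?D * ?T2 w)" by (rule sum_mono) (use vb in blast)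
  also have "\<dots> = cU ?D * (\<Sum>w\<in>V. ?T2 w)" by (rule sum_distrib_left[symmetric])
  finally show "harmonic_index (line_graph_edges E) \<le> cU ?D * harmonic_index E"
    unfolding HL HG2 .
qed


theorem theorem3p5:
  fixes V :: "'a set" and E :: "'a set set"
  assumes "graph V E" and "nontrivial_graph V E"
  defines "\<Delta> \<equiv> max_degree V E"
  shows "(\<Delta> < 3 \<longrightarrow>
            8 / 11 * harmonic_index E \<le> harmonic_index (line_graph_edges E) \<and>
            harmonic_index (line_graph_edges E) \<le> harmonic_index E)
       \<and> (3 \<le> \<Delta> \<and> \<Delta> \<le> 4 \<longrightarrow>
            4 / (real \<Delta> + 3) * harmonic_index E \<le> harmonic_index (line_graph_edges E) \<and>
            harmonic_index (line_graph_edges E) \<le> (real \<Delta> - 1) * harmonic_index E)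
       \<and> (\<Delta> > 4 \<longrightarrow>
            3 / (2 * real \<Delta> - 1) * harmonic_index E \<le> harmonic_index (line_graph_edges E) \<and>
            harmonic_index (line_graph_edges E) \<le> (real \<Delta> - 1) * harmonic_index E)"
proof -
  have l: "cL \<Delta> * harmonic_index E \<le> harmonic_index (line_graph_edges E)"
    and u: "harmonic_index (line_graph_edges E) \<le> cU \<Delta> * harmonic_index E"
    using main_bounds[OF assms(1,2)] unfolding \<Delta>_def by auto
  show ?thesis using l u by (auto simp: cL_def cU_def)
qed

end
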